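(* Let $K^\flat$ be the completion of an algebraic closure of $\mathbb{F}_p((t))$, with valuation ring $K^{\flat,\circ}$ and residue field $k=\overline{\mathbb{F}_p}$, viewed as a subfield of $K^\flat$. Let $u\in K^{\flat,\circ}$ with $|u|<1$ and let $g\in K^{\flat,\circ}\langle X_1,\dots,X_N\rangle$ be of the form \[g=\sum_{i=0}^\infty g_iu^i\quad\text{with } g_i\in k\langle X_1,\dots,X_N\rangle.\] Then there exists $\varepsilon>0$, depending on $g$, such that for every $x\in k^N$, either $g(x)=0$ or $|g(x)|>\varepsilon$.
   Context: $K^{\flat,\circ}\langle X_1,\dots,X_N\rangle$ is the ring of power series with coefficients in $K^{\flat,\circ}$ tending to $0$. Since $k$ carries the trivial absolute value, $k\langle X_1,\dots,X_N\rangle=k[X_1,\dots,X_N]$; in particular $|h(x)|\in\{0,1\}$ for $h\in k[X_1,\dots,X_N]$ and $x\in k^N$. *)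

theory Defs
  imports "HOL-Computational_Algebra.Polynomial"
begin

definition nonarch_abs :: "('a::field \<Rightarrow> real) \<Rightarrow> bool" where
  "nonarch_abs av \<longleftrightarrow>
     (\<forall>x. av x = 0 \<longleftrightarrow> x = 0) \<and> (\<forall>x. av x \<ge> 0) \<and>
     (\<forall>x y. av (x * y) = av x * av y) \<and>
     (\<forall>x y. av (x + y) \<le> max (av x) (av y))"

definition abs_complete :: "('a::field \<Rightarrow> real) \<Rightarrow> bool" where
  "abs_complete av \<longleftrightarrow>
     (\<forall>s::nat \<Rightarrow> 'a. (\<forall>e>0. \<exists>M. \<forall>m\<ge>M. \<forall>n\<ge>M. av (s m - s n) < e) \<longrightarrow>
        (\<exists>L. \<forall>e>0. \<exists>M. \<forall>n\<ge>M. av (s n - L) < e))"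

definition alg_closed_field :: "'a::field itself \<Rightarrow> bool" where
  "alg_closed_field _ \<longleftrightarrow> (\<forall>q::'a poly. degree q > 0 \<longrightarrow> (\<exists>z. poly q z = 0))"

definition is_subfield :: "'a::field set \<Rightarrow> bool" where
  "is_subfield k \<longleftrightarrow> 0 \<in> k \<and> 1 \<in> k \<and> (\<forall>a\<in>k. \<forall>b\<in>k. a + b \<in> k \<and> a * b \<in> k) \<and>
     (\<forall>a\<in>k. - a \<in> k \<and> inverse a \<in> k)"

definition alg_closed_subfield :: "'a::field set \<Rightarrow> bool" where
  "alg_closed_subfield k \<longleftrightarrow> is_subfield k \<and>
     (\<forall>q::'a poly. degree q > 0 \<and> (\<forall>i. coeff q i \<in> k) \<longrightarrow> (\<exists>z\<in>k. poly q z = 0))"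

text \<open>The field $K^\flat$ with its absolute value and the subfield $k = \overline{\mathbb F_p}$
  (a section of the residue map) as used in the paper, axiomatised by the relevant properties.\<close>
definition Kflat_setting :: "nat \<Rightarrow> ('a::field \<Rightarrow> real) \<Rightarrow> 'a set \<Rightarrow> bool" where
  "Kflat_setting p av k \<longleftrightarrow>
     prime p \<and> of_nat p = (0::'a) \<and>
     nonarch_abs av \<and> abs_complete av \<and> (\<exists>t. 0 < av t \<and> av t < 1) \<and>
     alg_closed_field TYPE('a) \<and>
     alg_closed_subfield k \<and>
     (\<forall>c\<in>k. \<exists>n>0. c ^ (p ^ n) = c) \<and>
     (\<forall>c\<in>k. c \<noteq> 0 \<longrightarrow> av c = 1) \<and>
     (\<forall>y. av y \<le> 1 \<longrightarrow> (\<exists>c\<in>k. av (y - c) < 1))"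

definition multi_idx :: "nat \<Rightarrow> (nat \<Rightarrow> nat) set" where
  "multi_idx N = {\<alpha>. \<forall>i\<ge>N. \<alpha> i = 0}"

definition monom_val :: "(nat \<Rightarrow> 'a::comm_ring_1) \<Rightarrow> nat \<Rightarrow> (nat \<Rightarrow> nat) \<Rightarrow> 'a" where
  "monom_val x N \<alpha> = (\<Prod>i<N. x i ^ \<alpha> i)"

definition restricted_ps :: "('a::field \<Rightarrow> real) \<Rightarrow> nat \<Rightarrow> ((nat \<Rightarrow> nat) \<Rightarrow> 'a) \<Rightarrow> bool" where
  "restricted_ps av N g \<longleftrightarrow> (\<forall>\<alpha>\<in>multi_idx N. av (g \<alpha>) \<le> 1) \<and>
     (\<forall>e>0. finite {\<alpha>\<in>multi_idx N. av (g \<alpha>) \<ge> e})"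

definition poly_over :: "'a::field set \<Rightarrow> nat \<Rightarrow> ((nat \<Rightarrow> nat) \<Rightarrow> 'a) \<Rightarrow> bool" where
  "poly_over k N h \<longleftrightarrow> (\<forall>\<alpha>\<in>multi_idx N. h \<alpha> \<in> k) \<and> finite {\<alpha>\<in>multi_idx N. h \<alpha> \<noteq> 0}"

definition abs_has_sum :: "('a::field \<Rightarrow> real) \<Rightarrow> ('i \<Rightarrow> 'a) \<Rightarrow> 'i set \<Rightarrow> 'a \<Rightarrow> bool" where
  "abs_has_sum av f I S \<longleftrightarrow>
     (\<forall>e>0. \<exists>F0. finite F0 \<and> F0 \<subseteq> I \<and>
        (\<forall>F. finite F \<and> F0 \<subseteq> F \<and> F \<subseteq> I \<longrightarrow> av (sum f F - S) < e))"

definition ps_eval :: "('a::field \<Rightarrow> real) \<Rightarrow> nat \<Rightarrow> ((nat \<Rightarrow> nat) \<Rightarrow> 'a) \<Rightarrow> (nat \<Rightarrow> 'a) \<Rightarrow> 'a" where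
  "ps_eval av N g x = (THE S. abs_has_sum av (\<lambda>\<alpha>. g \<alpha> * monom_val x N \<alpha>) (multi_idx N) S)"

text \<open>g = sum_i g_i u^i, convergence in the Gauss norm (uniform in the coefficients).\<close>
definition gauss_series_eq ::
  "('a::field \<Rightarrow> real) \<Rightarrow> nat \<Rightarrow> ((nat \<Rightarrow> nat) \<Rightarrow> 'a) \<Rightarrow> (nat \<Rightarrow> (nat \<Rightarrow> nat) \<Rightarrow> 'a) \<Rightarrow> 'a \<Rightarrow> bool" where
  "gauss_series_eq av N g gs u \<longleftrightarrow>
     (\<forall>e>0. \<exists>M. \<forall>n\<ge>M. \<forall>\<alpha>\<in>multi_idx N. av (g \<alpha> - (\<Sum>i<n. gs i \<alpha> * u ^ i)) < e)"

end

theory Submission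
  imports Defs "HOL-Library.List_Lexorder" "HOL-Library.Product_Lexorder"
begin


definition mi_le :: "(nat \<Rightarrow> nat) \<Rightarrow> (nat \<Rightarrow> nat) \<Rightarrow> bool" where
  "mi_le a b \<longleftrightarrow> (\<forall>i. a i \<le> b i)"
definition madd :: "(nat \<Rightarrow> nat) \<Rightarrow> (nat \<Rightarrow> nat) \<Rightarrow> nat \<Rightarrow> nat" where
  "madd a b = (\<lambda>i. a i + b i)"
definition msub :: "(nat \<Rightarrow> nat) \<Rightarrow> (nat \<Rightarrow> nat) \<Rightarrow> nat \<Rightarrow> nat" where
  "msub a b = (\<lambda>i. a i - b i)"
definition mdeg :: "nat \<Rightarrow> (nat \<Rightarrow> nat) \<Rightarrow> nat" where
  "mdeg N a = (\<Sum>i<N. a i)"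
definition mkey :: "nat \<Rightarrow> (nat \<Rightarrow> nat) \<Rightarrow> nat \<times> nat list" where
  "mkey N a = (mdeg N a, map a [0..<N])"

lemma list_add_less:
  "map (madd a c) is < map (madd b c) is \<longleftrightarrow> map a is < map b is"
  by (induction "is") (auto simp: madd_def)

lemma list_add_eq:
  "map (madd a c) is = map (madd b c) is \<longleftrightarrow> map a is = map b is"
  by (induction "is") (auto simp: madd_def)

lemma mdeg_add: "mdeg N (madd a c) = mdeg N a + mdeg N c"
  by (simp add: mdeg_def madd_def sum.distrib)

lemma mkey_add_le:
  assumes "mkey N a \<le> mkey N b" shows "mkey N (madd a c) \<le> mkey N (madd b c)"
  using assms list_add_less[of a c "[0..<N]" b] list_add_eq[of a c "[0..<N]" b]
  by (auto simp: mkey_def mdeg_add list_le_def)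

lemma mkey_inj:
  assumes "a \<in> multi_idx N" "b \<in> multi_idx N" "mkey N a = mkey N b" shows "a = b"
proof
  fix i show "a i = b i"
  proof (cases "i < N")
    case True
    from assms(3) have "map a [0..<N] = map b [0..<N]" by (simp add: mkey_def)
    then show ?thesis using True by (simp add: map_eq_conv)
  next
    case False then show ?thesis using assms(1,2) by (simp add: multi_idx_def)
  qed
qed

lemma finite_deg_le: "finite {b \<in> multi_idx N. mdeg N b \<le> d}"
proof -
  have "{b \<in> multi_idx N. mdeg N b \<le> d} \<subseteq>
     (\<lambda>xs i. if i < N then xs ! i else 0) ` {xs. set xs \<subseteq> {0..d} \<and> length xs = N}"
  proof
    fix b assume b: "b \<in> {b \<in> multi_idx N. mdeg N b \<le> d}"
    have "b i \<le> d" if "i < N" for i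
    proof -
      have "b i \<le> mdeg N b" unfolding mdeg_def
        using that by (intro member_le_sum) auto
      then show ?thesis using b by simp
    qed
    then have "map b [0..<N] \<in> {xs. set xs \<subseteq> {0..d} \<and> length xs = N}" by auto
    moreover have "b = (\<lambda>i. if i < N then map b [0..<N] ! i else 0)"
      using b by (auto simp: multi_idx_def)
    ultimately show "b \<in> (\<lambda>xs i. if i < N then xs ! i else 0) ` {xs. set xs \<subseteq> {0..d} \<and> length xs = N}"
      by blast
  qed
  moreover have "finite {xs. set xs \<subseteq> {0..d::nat} \<and> length xs = N}"
    by (rule finite_lists_length_eq) simp
  ultimately show ?thesis by (rule finite_subset[OF _ finite_imageI])
qed

definition rk :: "nat \<Rightarrow> (nat \<Rightarrow> nat) \<Rightarrow> nat" where
  "rk N a = card {b \<in> multi_idx N. mkey N b < mkey N a}"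

lemma rk_less:
  assumes "b \<in> multi_idx N" "mkey N b < mkey N a" shows "rk N b < rk N a"
proof -
  have fin: "finite {c \<in> multi_idx N. mkey N c < mkey N a}"
    by (rule finite_subset[OF _ finite_deg_le[of N "mdeg N a"]])
       (auto simp: mkey_def less_prod_def)
  have "{c \<in> multi_idx N. mkey N c < mkey N b} \<subset> {c \<in> multi_idx N. mkey N c < mkey N a}"
    using assms by auto
  then show ?thesis unfolding rk_def by (rule psubset_card_mono[OF fin])
qed


definition psupp :: "((nat \<Rightarrow> nat) \<Rightarrow> 'a::field) \<Rightarrow> (nat \<Rightarrow> nat) set" where
  "psupp f = {a. f a \<noteq> 0}"
definition pset :: "nat \<Rightarrow> ((nat \<Rightarrow> nat) \<Rightarrow> 'a::field) set" where
  "pset N = {f. finite (psupp f) \<and> psupp f \<subseteq> multi_idx N}"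
definition shift :: "(nat \<Rightarrow> nat) \<Rightarrow> ((nat \<Rightarrow> nat) \<Rightarrow> 'a::field) \<Rightarrow> (nat \<Rightarrow> nat) \<Rightarrow> 'a" where
  "shift c f = (\<lambda>a. if mi_le c a then f (msub a c) else 0)"
definition is_lm :: "nat \<Rightarrow> ((nat \<Rightarrow> nat) \<Rightarrow> 'a::field) \<Rightarrow> (nat \<Rightarrow> nat) \<Rightarrow> bool" where
  "is_lm N f a \<longleftrightarrow> a \<in> psupp f \<and> (\<forall>b\<in>psupp f. mkey N b \<le> mkey N a)"

lemma lm_exists:
  assumes "f \<in> pset N" "psupp f \<noteq> {}" shows "\<exists>a. is_lm N f a"
proof -
  have fin: "finite (mkey N ` psupp f)" using assms by (simp add: pset_def)
  have "Max (mkey N ` psupp f) \<in> mkey N ` psupp f"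
    using assms(2) fin by (intro Max_in) auto
  then obtain a where a: "a \<in> psupp f" "mkey N a = Max (mkey N ` psupp f)" by auto
  have "\<forall>b\<in>psupp f. mkey N b \<le> mkey N a" using a fin by auto
  then show ?thesis using a unfolding is_lm_def by blast
qed

lemma msub_madd: "mi_le c a \<Longrightarrow> madd (msub a c) c = a"
  by (auto simp: mi_le_def madd_def msub_def)

lemma madd_msub: "msub (madd b c) c = b"
  by (auto simp: madd_def msub_def)

lemma multi_idx_madd: "a \<in> multi_idx N \<Longrightarrow> c \<in> multi_idx N \<Longrightarrow> madd a c \<in> multi_idx N"
  by (auto simp: multi_idx_def madd_def)

lemma multi_idx_msub: "a \<in> multi_idx N \<Longrightarrow> msub a c \<in> multi_idx N"
  by (auto simp: multi_idx_def msub_def)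

lemma psupp_shift: "psupp (shift c f) = (\<lambda>b. madd b c) ` psupp f"
proof
  show "psupp (shift c f) \<subseteq> (\<lambda>b. madd b c) ` psupp f"
  proof
    fix a assume "a \<in> psupp (shift c f)"
    then have "mi_le c a" "f (msub a c) \<noteq> 0" by (auto simp: psupp_def shift_def split: if_splits)
    then show "a \<in> (\<lambda>b. madd b c) ` psupp f"
      by (intro image_eqI[of _ _ "msub a c"]) (auto simp: msub_madd psupp_def)
  qed
  show "(\<lambda>b. madd b c) ` psupp f \<subseteq> psupp (shift c f)"
    by (auto simp: psupp_def shift_def madd_msub[unfolded madd_def] mi_le_def madd_def)
qed

lemma shift_pset: "f \<in> pset N \<Longrightarrow> c \<in> multi_idx N \<Longrightarrow> shift c f \<in> pset N"
  unfolding pset_def by (auto simp: psupp_shift multi_idx_madd)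

lemma comb_pset:
  assumes "f \<in> pset N" "h \<in> pset N" shows "(\<lambda>a. f a + r * h a) \<in> pset N"
proof -
  have "psupp (\<lambda>a. f a + r * h a) \<subseteq> psupp f \<union> psupp h" by (auto simp: psupp_def)
  then show ?thesis using assms unfolding pset_def by (auto intro: finite_subset)
qed

lemma key_lemma:
  fixes I J :: "((nat \<Rightarrow> nat) \<Rightarrow> 'a::field) set"
  assumes IJ: "I \<subseteq> J" and Jp: "J \<subseteq> pset N"
    and Jc: "\<And>f h r c. f \<in> J \<Longrightarrow> h \<in> I \<Longrightarrow> c \<in> multi_idx N \<Longrightarrow> (\<lambda>a. f a + r * shift c h a) \<in> J"
    and Ic: "\<And>f h r c. f \<in> I \<Longrightarrow> h \<in> I \<Longrightarrow> c \<in> multi_idx N \<Longrightarrow> (\<lambda>a. f a + r * shift c h a) \<in> I"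
    and I0: "(\<lambda>_. 0) \<in> I"
    and H: "\<And>f a. f \<in> J \<Longrightarrow> is_lm N f a \<Longrightarrow> \<exists>h\<in>I. \<exists>b. is_lm N h b \<and> mi_le b a"
  shows "J \<subseteq> I"
proof -
  have zero: "f \<in> I" if "psupp f = {}" for f
  proof -
    have "f = (\<lambda>_. 0)" using that by (auto simp: psupp_def)
    then show ?thesis using I0 by simp
  qed
  have main: "\<And>f a. rk N a = n \<Longrightarrow> f \<in> J \<Longrightarrow> is_lm N f a \<Longrightarrow> f \<in> I" for n
  proof (induction n rule: less_induct)
    case (less n f a)
    obtain h b where h: "h \<in> I" "is_lm N h b" "mi_le b a" using H less.prems by blast
    define c where "c = msub a b"
    define r where "r = f a / h b"
    define f' where "f' = (\<lambda>x. f x + (- r) * shift c h x)"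
    have hp: "h \<in> pset N" using h(1) IJ Jp by auto
    have fp: "f \<in> pset N" using less.prems Jp by auto
    have aN: "a \<in> multi_idx N" using less.prems fp by (auto simp: is_lm_def pset_def)
    have bN: "b \<in> multi_idx N" using h hp by (auto simp: is_lm_def pset_def)
    have cN: "c \<in> multi_idx N" using aN by (simp add: c_def multi_idx_msub)
    have f'J: "f' \<in> J" unfolding f'_def using Jc[OF less.prems(2) h(1) cN] .
    have hb: "h b \<noteq> 0" using h(2) by (simp add: is_lm_def psupp_def)
    have cb: "mi_le c a" "msub a c = b" "madd b c = a" using h(3)
      by (auto simp: c_def mi_le_def msub_def madd_def fun_eq_iff)
    have f'a: "f' a = 0" using hb cb by (simp add: f'_def shift_def r_def)
    have sub: "psupp f' \<subseteq> {d \<in> multi_idx N. mkey N d < mkey N a}"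
    proof
      fix d assume d: "d \<in> psupp f'"
      have dN: "d \<in> multi_idx N" using d comb_pset[OF fp shift_pset[OF hp cN], of "-r"]
        by (auto simp: pset_def f'_def)
      have "d \<noteq> a" using d f'a by (auto simp: psupp_def)
      moreover have "mkey N d \<le> mkey N a"
      proof (cases "f d = 0")
        case True
        then have "shift c h d \<noteq> 0" using d by (auto simp: f'_def psupp_def)
        then have "d \<in> (\<lambda>b. madd b c) ` psupp h" using psupp_shift[of c h] by (auto simp: psupp_def)
        then obtain e where e: "e \<in> psupp h" "d = madd e c" by auto
        have "mkey N e \<le> mkey N b" using h(2) e by (auto simp: is_lm_def)
        then have "mkey N (madd e c) \<le> mkey N (madd b c)" by (rule mkey_add_le)
        then show ?thesis using e cb by simp
      next
        case False
        then show ?thesis using less.prems(3) by (auto simp: is_lm_def psupp_def)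
      qed
      ultimately have "mkey N d < mkey N a" using mkey_inj[OF dN aN] by (auto simp: order.order_iff_strict)
      then show "d \<in> {d \<in> multi_idx N. mkey N d < mkey N a}" using dN by simp
    qed
    have f'I: "f' \<in> I"
    proof (cases "psupp f' = {}")
      case True then show ?thesis by (rule zero)
    next
      case False
      have f'p: "f' \<in> pset N" using f'J Jp by auto
      obtain a' where a': "is_lm N f' a'" using lm_exists[OF f'p False] by blast
      then have "a' \<in> {d \<in> multi_idx N. mkey N d < mkey N a}" using sub by (auto simp: is_lm_def)
      then have "rk N a' < n" using rk_less less.prems(1) by auto
      then show ?thesis using less.IH f'J a' by blast
    qed
    have "f = (\<lambda>x. f' x + r * shift c h x)" by (simp add: f'_def)
    then show "f \<in> I" using Ic[OF f'I h(1) cN] by simp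
  qed
  show ?thesis
  proof
    fix f assume f: "f \<in> J"
    show "f \<in> I"
    proof (cases "psupp f = {}")
      case True then show ?thesis by (rule zero)
    next
      case False
      then obtain a where "is_lm N f a" using lm_exists f Jp by blast
      then show ?thesis using main f by blast
    qed
  qed
qed


inductive_set igen :: "nat \<Rightarrow> ((nat \<Rightarrow> nat) \<Rightarrow> 'a::field) set \<Rightarrow> ((nat \<Rightarrow> nat) \<Rightarrow> 'a) set"
  for N G where
  gen: "g \<in> G \<Longrightarrow> g \<in> igen N G"
| zero: "(\<lambda>_. 0) \<in> igen N G"
| comb: "f \<in> igen N G \<Longrightarrow> h \<in> igen N G \<Longrightarrow> c \<in> multi_idx N \<Longrightarrow>
     (\<lambda>a. f a + r * shift c h a) \<in> igen N G"

lemma igen_pset: "G \<subseteq> pset N \<Longrightarrow> igen N G \<subseteq> pset N"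
proof
  fix f assume G: "G \<subseteq> pset N" and f: "f \<in> igen N G"
  from f show "f \<in> pset N"
  proof (induction rule: igen.induct)
    case (zero) then show ?case by (simp add: pset_def psupp_def)
  next
    case (comb f h c r) then show ?case using comb_pset shift_pset by blast
  qed (use G in auto)
qed

lemma igen_mono: "G \<subseteq> G' \<Longrightarrow> igen N G \<subseteq> igen N G'"
proof
  fix f assume GG: "G \<subseteq> G'" and f: "f \<in> igen N G"
  from f show "f \<in> igen N G'"
  proof (induction rule: igen.induct)
    case (gen g) then have "g \<in> G'" using GG by blast
    then show ?case by (rule igen.gen)
  next
    case zero then show ?case by (rule igen.zero)
  next
    case (comb f h c r) show ?case by (rule igen.comb) (use comb in auto)
  qed
qed

lemma dickson1:
  fixes s :: "nat \<Rightarrow> nat"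
  shows "\<exists>r::nat\<Rightarrow>nat. strict_mono r \<and> (\<forall>m n. m \<le> n \<longrightarrow> s (r m) \<le> s (r n))"
proof -
  obtain f where f: "strict_mono f" "monoseq (\<lambda>n. s (f n))" using seq_monosub by blast
  show ?thesis
  proof (cases "\<forall>m n. m \<le> n \<longrightarrow> s (f m) \<le> s (f n)")
    case True then show ?thesis using f by blast
  next
    case False
    then have dec: "\<forall>m n. m \<le> n \<longrightarrow> s (f n) \<le> s (f m)" using f(2) by (auto simp: monoseq_def)
    define v where "v = (LEAST v. \<exists>n. s (f n) = v)"
    have "\<exists>n. s (f n) = v" unfolding v_def by (rule LeastI[of _ "s (f 0)"]) blast
    then obtain n0 where n0: "s (f n0) = v" by blast
    have vmin: "v \<le> s (f n)" for n unfolding v_def by (rule Least_le) blast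
    have const: "s (f (n + n0)) = v" for n
    proof -
      have "s (f (n + n0)) \<le> s (f n0)" using dec by simp
      then show ?thesis using vmin[of "n + n0"] n0 by simp
    qed
    have "strict_mono (\<lambda>n. f (n + n0))" using f(1) by (auto simp: strict_mono_def)
    moreover have "\<forall>m n. m \<le> n \<longrightarrow> s (f (m + n0)) \<le> s (f (n + n0))" by (simp add: const)
    ultimately show ?thesis by blast
  qed
qed

lemma dickson:
  fixes a :: "nat \<Rightarrow> nat \<Rightarrow> nat"
  shows "\<exists>r::nat\<Rightarrow>nat. strict_mono r \<and> (\<forall>m n. m \<le> n \<longrightarrow> (\<forall>i<N. a (r m) i \<le> a (r n) i))"
proof (induction N)
  case 0
  show ?case by (rule exI[where x="id::nat\<Rightarrow>nat"]) (simp add: strict_mono_def)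
next
  case (Suc N)
  from Suc obtain r :: "nat \<Rightarrow> nat" where r: "strict_mono r"
    "\<And>m n i. m \<le> n \<Longrightarrow> i < N \<Longrightarrow> a (r m) i \<le> a (r n) i" by auto
  obtain r2 :: "nat \<Rightarrow> nat" where r2: "strict_mono r2"
    "\<And>m n. m \<le> n \<Longrightarrow> a (r (r2 m)) N \<le> a (r (r2 n)) N"
    using dickson1[of "\<lambda>n. a (r n) N"] by auto
  have sm: "strict_mono (\<lambda>x. r (r2 x))" using r(1) r2(1) by (rule strict_mono_compose)
  have le: "a (r (r2 m)) i \<le> a (r (r2 n)) i" if mn: "m \<le> n" and i: "i < Suc N" for m n i
  proof -
    have rr: "r2 m \<le> r2 n" using r2(1) mn by (simp add: strict_mono_less_eq)
    show ?thesis
    proof (cases "i = N")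
      case True then show ?thesis using r2(2)[OF mn] by simp
    next
      case False then have "i < N" using i by simp
      then show ?thesis using r(2)[OF rr] by blast
    qed
  qed
  show ?case by (rule exI[where x="\<lambda>x. r (r2 x)"]) (use sm le in blast)
qed

lemma stabilize:
  fixes P :: "nat \<Rightarrow> (nat \<Rightarrow> nat) \<Rightarrow> 'a::field"
  assumes Pp: "\<And>i. P i \<in> pset N"
  shows "\<exists>n0. \<forall>m. P m \<in> igen N (P ` {..n0})"
proof (rule ccontr)
  assume nst: "\<not> ?thesis"
  define I where "I n = igen N (P ` {..n})" for n
  have Imono: "I n \<subseteq> I m" if "n \<le> m" for n m
    unfolding I_def using that by (intro igen_mono) auto
  have Ip: "I n \<subseteq> pset N" for n unfolding I_def using Pp by (intro igen_pset) auto
  define Q where "Q n m f a \<longleftrightarrow> n \<le> m \<and> f \<in> I m \<and> is_lm N f a \<and>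
      (\<forall>h b. h \<in> I n \<longrightarrow> is_lm N h b \<longrightarrow> \<not> mi_le b a)" for n m f a
  have step: "\<exists>m f a. Q n m f a" for n
  proof -
    obtain m0 where m0: "P m0 \<notin> I n" using nst unfolding I_def by blast
    define m where "m = max n m0"
    have "P m0 \<in> I m" unfolding I_def m_def by (rule igen.gen) auto
    then have nsub: "\<not> I m \<subseteq> I n" using m0 by blast
    have "\<exists>f a. f \<in> I m \<and> is_lm N f a \<and> \<not> (\<exists>h\<in>I n. \<exists>b. is_lm N h b \<and> mi_le b a)"
    proof (rule ccontr)
      assume "\<not> ?thesis"
      then have H: "\<And>f a. f \<in> I m \<Longrightarrow> is_lm N f a \<Longrightarrow> \<exists>h\<in>I n. \<exists>b. is_lm N h b \<and> mi_le b a"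
        by blast
      have "I m \<subseteq> I n"
      proof (rule key_lemma[of "I n" "I m" N])
        show "I n \<subseteq> I m" by (rule Imono) (simp add: m_def)
        show "I m \<subseteq> pset N" by (rule Ip)
        show "(\<lambda>a. f a + r * shift c h a) \<in> I m"
          if "f \<in> I m" "h \<in> I n" "c \<in> multi_idx N" for f h r c
        proof -
          have "h \<in> I m" using that(2) Imono[of n m] by (auto simp: m_def)
          then show ?thesis using igen.comb[OF that(1)[unfolded I_def] _ that(3)] unfolding I_def by blast
        qed
        show "(\<lambda>a. f a + r * shift c h a) \<in> I n"
          if "f \<in> I n" "h \<in> I n" "c \<in> multi_idx N" for f h r c
          using igen.comb[OF that[unfolded I_def]] unfolding I_def by blast
        show "(\<lambda>_. 0) \<in> I n" unfolding I_def by (rule igen.zero)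
      qed (rule H)
      then show False using nsub by blast
    qed
    then show ?thesis unfolding m_def Q_def by (intro exI[of _ "max n m0"]) auto
  qed
  define X where "X n = (SOME x. Q n (fst x) (fst (snd x)) (snd (snd x)))" for n
  define M where "M n = fst (X n)" for n
  define F where "F n = fst (snd (X n))" for n
  define A where "A n = snd (snd (X n))" for n
  have MFA0: "Q n (M n) (F n) (A n)" for n
  proof -
    obtain m f a where "Q n m f a" using step by blast
    then have "\<exists>x. Q n (fst x) (fst (snd x)) (snd (snd x))" by (intro exI[of _ "(m, f, a)"]) simp
    then show ?thesis unfolding M_def F_def A_def X_def by (rule someI_ex)
  qed
  have MFA: "n \<le> M n \<and> F n \<in> I (M n) \<and> is_lm N (F n) (A n) \<and>
      (\<forall>h b. h \<in> I n \<longrightarrow> is_lm N h b \<longrightarrow> \<not> mi_le b (A n))" for n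
    using MFA0[of n] by (simp add: Q_def)
  define ns where "ns j = (M ^^ j) 0" for j
  have ns_suc: "ns (Suc j) = M (ns j)" for j by (simp add: ns_def)
  have "incseq ns" by (rule incseq_SucI) (simp add: ns_suc MFA)
  have "\<exists>r::nat\<Rightarrow>nat. strict_mono r \<and> (\<forall>m n. m \<le> n \<longrightarrow> (\<forall>i<N. A (ns (r m)) i \<le> A (ns (r n)) i))"
    by (rule dickson)
  then obtain r :: "nat \<Rightarrow> nat" where r: "strict_mono r" "\<forall>m n. m \<le> n \<longrightarrow> (\<forall>i<N. A (ns (r m)) i \<le> A (ns (r n)) i)"
    by blast
  define i where "i = r 0"
  define j where "j = r 1"
  have ij: "i < j" using r(1) by (simp add: i_def j_def strict_mono_def)
  have "ns (Suc i) \<le> ns j" using \<open>incseq ns\<close> ij by (simp add: incseq_def)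
  then have "F (ns i) \<in> I (ns j)" using MFA[of "ns i"] Imono[OF \<open>ns (Suc i) \<le> ns j\<close>] ns_suc[of i] by auto
  moreover have "is_lm N (F (ns i)) (A (ns i))" using MFA by blast
  ultimately have nle: "\<not> mi_le (A (ns i)) (A (ns j))" using MFA[of "ns j"] by blast
  have inN: "A (ns l) \<in> multi_idx N" for l
    using MFA[of "ns l"] Ip by (auto simp: is_lm_def pset_def)
  have "mi_le (A (ns i)) (A (ns j))" unfolding mi_le_def
  proof
    fix q show "A (ns i) q \<le> A (ns j) q"
    proof (cases "q < N")
      case True then show ?thesis using r(2) unfolding i_def j_def by blast
    next
      case False then show ?thesis using inN[of i] by (simp add: multi_idx_def)
    qed
  qed
  then show False using nle by blast
qed



definition ev :: "nat \<Rightarrow> (nat \<Rightarrow> 'a) \<Rightarrow> ((nat \<Rightarrow> nat) \<Rightarrow> 'a::field) \<Rightarrow> 'a" where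
  "ev N x f = (\<Sum>a\<in>psupp f. f a * monom_val x N a)"

lemma ev_sup:
  assumes "finite B" "psupp f \<subseteq> B" shows "ev N x f = (\<Sum>a\<in>B. f a * monom_val x N a)"
  unfolding ev_def
  by (rule sum.mono_neutral_left[OF assms]) (auto simp: psupp_def)

lemma monom_madd: "monom_val x N (madd b c) = monom_val x N b * monom_val x N c"
  by (simp add: monom_val_def madd_def power_add prod.distrib)

lemma ev_shift:
  assumes "h \<in> pset N" shows "ev N x (shift c h) = monom_val x N c * ev N x h"
proof -
  have inj: "inj_on (\<lambda>b. madd b c) (psupp h)"
    by (rule inj_onI) (metis madd_msub)
  have "ev N x (shift c h) = (\<Sum>a\<in>(\<lambda>b. madd b c) ` psupp h. shift c h a * monom_val x N a)"
    unfolding ev_def psupp_shift ..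
  also have "\<dots> = (\<Sum>b\<in>psupp h. shift c h (madd b c) * monom_val x N (madd b c))"
    by (rule sum.reindex[OF inj, unfolded comp_def])
  also have "\<dots> = (\<Sum>b\<in>psupp h. monom_val x N c * (h b * monom_val x N b))"
  proof (rule sum.cong)
    fix b assume "b \<in> psupp h"
    have "mi_le c (madd b c)" by (simp add: mi_le_def madd_def)
    then show "shift c h (madd b c) * monom_val x N (madd b c) = monom_val x N c * (h b * monom_val x N b)"
      by (simp add: shift_def madd_msub monom_madd)
  qed simp
  also have "\<dots> = monom_val x N c * ev N x h" by (simp add: ev_def sum_distrib_left)
  finally show ?thesis .
qed

lemma ev_comb:
  assumes "f \<in> pset N" "h \<in> pset N" "c \<in> multi_idx N"
  shows "ev N x (\<lambda>a. f a + r * shift c h a) = ev N x f + r * ev N x (shift c h)"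
proof -
  have sp: "shift c h \<in> pset N" by (rule shift_pset[OF assms(2,3)])
  define B where "B = psupp f \<union> psupp (shift c h)"
  have fin: "finite B" using assms(1) sp by (simp add: B_def pset_def)
  have "ev N x (\<lambda>a. f a + r * shift c h a) = (\<Sum>a\<in>B. (f a + r * shift c h a) * monom_val x N a)"
    by (rule ev_sup[OF fin]) (auto simp: B_def psupp_def)
  also have "\<dots> = (\<Sum>a\<in>B. f a * monom_val x N a) + r * (\<Sum>a\<in>B. shift c h a * monom_val x N a)"
    by (simp add: algebra_simps sum.distrib sum_distrib_left)
  also have "\<dots> = ev N x f + r * ev N x (shift c h)"
    using ev_sup[OF fin, of f N x] ev_sup[OF fin, of "shift c h" N x] by (simp add: B_def)
  finally show ?thesis .
qed

lemma vanish:
  assumes "f \<in> igen N G" "G \<subseteq> pset N" "\<And>g. g \<in> G \<Longrightarrow> ev N x g = 0"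
  shows "ev N x f = 0"
  using assms(1)
proof (induction rule: igen.induct)
  case (gen g) then show ?case using assms(3) by blast
next
  case zero then show ?case by (simp add: ev_def psupp_def)
next
  case (comb f h c r)
  have fp: "f \<in> pset N" and hp: "h \<in> pset N" using comb.hyps(1,2) igen_pset[OF assms(2)] by auto
  show ?case using comb.IH comb.hyps(3) by (simp add: ev_comb[OF fp hp] ev_shift[OF hp])
qed



context
  fixes av :: "'a::field \<Rightarrow> real"
  assumes NA: "nonarch_abs av"
begin

lemma av0: "av 0 = 0" using NA by (simp add: nonarch_abs_def)
lemma av_nonneg: "av x \<ge> 0" using NA by (simp add: nonarch_abs_def)
lemma av_eq0: "av x = 0 \<longleftrightarrow> x = 0" using NA by (simp add: nonarch_abs_def)
lemma av_mult: "av (x * y) = av x * av y" using NA by (simp add: nonarch_abs_def)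
lemma av_add: "av (x + y) \<le> max (av x) (av y)" using NA by (simp add: nonarch_abs_def)

lemma av1: "av 1 = 1"
proof -
  have "av 1 = av 1 * av 1" using av_mult[of 1 1] by simp
  moreover have "av 1 \<noteq> 0" using av_eq0[of 1] by simp
  ultimately show ?thesis by simp
qed

lemma av_minus: "av (- x) = av x"
proof -
  have "av (-1) * av (-1) = 1" using av_mult[of "-1" "-1"] av1 by simp
  then have "av (-1) = 1" using av_nonneg[of "-1"]
    by (metis abs_of_nonneg abs_square_eq_1 power2_eq_square)
  then show ?thesis using av_mult[of "-1" x] by simp
qed

lemma av_diff_sym: "av (a - b) = av (b - a)"
  using av_minus[of "a - b"] by simp

lemma av_add_lt: "av x < e \<Longrightarrow> av y < e \<Longrightarrow> av (x + y) < e"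
  using av_add[of x y] by simp

lemma av_diff_lt: "av x < e \<Longrightarrow> av y < e \<Longrightarrow> av (x - y) < e"
  using av_add_lt[of x e "- y"] av_minus[of y] by simp

lemma av_sum_lt:
  assumes "finite F" "e > 0" "\<And>i. i \<in> F \<Longrightarrow> av (h i) < e"
  shows "av (sum h F) < e"
  using assms(1,3)
proof (induction F rule: finite_induct)
  case empty then show ?case using assms(2) av0 by simp
next
  case (insert a F) then show ?case by (simp add: av_add_lt)
qed

lemma av_strict: assumes "av z < av y" shows "av (y + z) = av y"
proof -
  have "av (y + z) \<le> av y" using av_add[of y z] assms by simp
  moreover have "av y \<le> max (av (y + z)) (av (- z))" using av_add[of "y + z" "- z"] by simp
  then have "av y \<le> av (y + z)" using assms av_minus[of z] by (auto simp: max_def split: if_splits)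
  ultimately show ?thesis by simp
qed

lemma av_power: "av (x ^ n) = av x ^ n"
  by (induction n) (simp_all add: av1 av_mult)

lemma av_small_eq0: assumes "\<And>e. e > 0 \<Longrightarrow> av x < e" shows "x = 0"
proof (rule ccontr)
  assume "x \<noteq> 0"
  then have "av x > 0" using av_eq0[of x] av_nonneg[of x] by simp
  then show False using assms[of "av x"] by simp
qed

end

context
  fixes k :: "'a::field set"
  assumes SF: "is_subfield k"
begin

lemma k_add: "a \<in> k \<Longrightarrow> b \<in> k \<Longrightarrow> a + b \<in> k" using SF by (simp add: is_subfield_def)
lemma k_mult: "a \<in> k \<Longrightarrow> b \<in> k \<Longrightarrow> a * b \<in> k" using SF by (simp add: is_subfield_def)
lemma k0: "0 \<in> k" using SF by (simp add: is_subfield_def)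
lemma k1: "1 \<in> k" using SF by (simp add: is_subfield_def)

lemma k_sum: "(\<And>i. i \<in> A \<Longrightarrow> f i \<in> k) \<Longrightarrow> sum f A \<in> k"
proof (induction A rule: infinite_finite_induct)
  case (infinite A) then show ?case using k0 by simp
next
  case empty then show ?case using k0 by simp
next
  case (insert a A) then show ?case using k_add by simp
qed

lemma k_prod: "(\<And>i. i \<in> A \<Longrightarrow> f i \<in> k) \<Longrightarrow> prod f A \<in> k"
proof (induction A rule: infinite_finite_induct)
  case (infinite A) then show ?case using k1 by simp
next
  case empty then show ?case using k1 by simp
next
  case (insert a A) then show ?case using k_mult by simp
qed

lemma k_power: "a \<in> k \<Longrightarrow> a ^ n \<in> k"
  by (induction n) (simp_all add: k1 k_mult)

end



theorem mainTheorem8: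
  fixes p N :: nat and av :: "'a::field \<Rightarrow> real" and k :: "'a set"
    and u :: 'a and g :: "(nat \<Rightarrow> nat) \<Rightarrow> 'a" and gs :: "nat \<Rightarrow> (nat \<Rightarrow> nat) \<Rightarrow> 'a"
  assumes "Kflat_setting p av k"
    and "av u < 1"
    and "restricted_ps av N g"
    and "\<forall>i. poly_over k N (gs i)"
    and "gauss_series_eq av N g gs u"
  shows "\<exists>\<epsilon>>0. \<forall>x. (\<forall>i<N. x i \<in> k) \<longrightarrow>
            ps_eval av N g x = 0 \<or> av (ps_eval av N g x) > \<epsilon>"
proof -
  have NA: "nonarch_abs av" and CO: "abs_complete av" and SF: "is_subfield k"
    and kabs: "\<And>c. c \<in> k \<Longrightarrow> c \<noteq> 0 \<Longrightarrow> av c = 1"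
    using assms(1) by (auto simp: Kflat_setting_def alg_closed_subfield_def)
  have kle1: "av c \<le> 1" if "c \<in> k" for c
    using kabs[OF that] av0[OF NA] by (cases "c = 0") auto
  define gs' where "gs' i = (\<lambda>a. if a \<in> multi_idx N then gs i a else 0)" for i
  have psupp_gs': "psupp (gs' i) = {a \<in> multi_idx N. gs i a \<noteq> 0}" for i
    by (auto simp: psupp_def gs'_def)
  have gs'p: "gs' i \<in> pset N" for i
    using assms(4) by (auto simp: pset_def psupp_gs' poly_over_def)
  obtain n0 where n0: "\<And>m. gs' m \<in> igen N (gs' ` {..n0})"
    using stabilize[of gs' N, OF gs'p] by blast
  define c where "c = av u"
  have c0: "c \<ge> 0" and c1: "c < 1" using av_nonneg[OF NA] assms(2) by (auto simp: c_def)
  define \<epsilon> where "\<epsilon> = (if c = 0 then 1/2 else c ^ n0 / 2)"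
  have epos: "\<epsilon> > 0" using c0 by (auto simp: \<epsilon>_def)
  have "\<forall>x. (\<forall>i<N. x i \<in> k) \<longrightarrow> ps_eval av N g x = 0 \<or> av (ps_eval av N g x) > \<epsilon>"
  proof (intro allI impI)
    fix x assume xk: "\<forall>i<N. x i \<in> k"
    define mon where "mon \<alpha> = monom_val x N \<alpha>" for \<alpha>
    have monk: "mon \<alpha> \<in> k" for \<alpha>
      unfolding mon_def monom_val_def using xk
      by (intro k_prod[OF SF] k_power[OF SF]) auto
    have mon1: "av (mon \<alpha>) \<le> 1" for \<alpha> using kle1[OF monk] .
    define a where "a i = ev N x (gs' i)" for i
    have ak: "a i \<in> k" for i
      unfolding a_def ev_def
      by (intro k_sum[OF SF] k_mult[OF SF]) (auto simp: gs'_def psupp_def monk[unfolded mon_def]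
          intro: assms(4)[rule_format, unfolded poly_over_def, THEN conjunct1, rule_format])
    have a_all: "a m = 0" if "\<forall>i\<le>n0. a i = 0" for m
      using vanish[OF n0[of m], of x] gs'p that by (auto simp: a_def)
    define Pn where "Pn n = (\<Sum>i<n. a i * u ^ i)" for n
    define q where "q n \<alpha> = (\<Sum>i<n. gs i \<alpha> * u ^ i)" for n \<alpha>
    define Bn where "Bn n = (\<Union>i<n. psupp (gs' i))" for n
    have Bn_fin: "finite (Bn n)" for n using gs'p by (auto simp: Bn_def pset_def)
    have Bn_sub: "Bn n \<subseteq> multi_idx N" for n using gs'p by (auto simp: Bn_def pset_def)
    have Bn_mono: "Bn n \<subseteq> Bn m" if "n \<le> m" for n m
      unfolding Bn_def using that by (intro UN_mono) auto
    have Pn_eq: "Pn n = (\<Sum>\<alpha>\<in>B. q n \<alpha> * mon \<alpha>)"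
      if B: "finite B" "B \<subseteq> multi_idx N" "Bn n \<subseteq> B" for n B
    proof -
      have ai: "a i = (\<Sum>\<alpha>\<in>B. gs i \<alpha> * mon \<alpha>)" if "i < n" for i
      proof -
        have "a i = (\<Sum>\<alpha>\<in>B. gs' i \<alpha> * mon \<alpha>)"
          unfolding a_def mon_def using B that by (intro ev_sup) (auto simp: Bn_def)
        also have "\<dots> = (\<Sum>\<alpha>\<in>B. gs i \<alpha> * mon \<alpha>)"
          using B by (intro sum.cong) (auto simp: gs'_def)
        finally show ?thesis .
      qed
      have "Pn n = (\<Sum>i<n. (\<Sum>\<alpha>\<in>B. gs i \<alpha> * mon \<alpha>) * u ^ i)"
        unfolding Pn_def by (intro sum.cong) (simp_all add: ai)
      also have "\<dots> = (\<Sum>i<n. \<Sum>\<alpha>\<in>B. gs i \<alpha> * u ^ i * mon \<alpha>)"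
        by (intro sum.cong refl) (simp add: sum_distrib_left sum_distrib_right mult_ac)
      also have "\<dots> = (\<Sum>\<alpha>\<in>B. \<Sum>i<n. gs i \<alpha> * u ^ i * mon \<alpha>)" by (rule sum.swap)
      also have "\<dots> = (\<Sum>\<alpha>\<in>B. q n \<alpha> * mon \<alpha>)"
        by (simp add: q_def sum_distrib_right)
      finally show ?thesis .
    qed
    have GS: "\<exists>M. \<forall>n\<ge>M. \<forall>\<alpha>\<in>multi_idx N. av (g \<alpha> - q n \<alpha>) < e" if "e > 0" for e
      using assms(5) that unfolding gauss_series_eq_def q_def by blast
    have est: "av ((\<Sum>\<alpha>\<in>F. g \<alpha> * mon \<alpha>) - Pn n) < e"
      if e: "e > 0" and n: "\<forall>\<alpha>\<in>multi_idx N. av (g \<alpha> - q n \<alpha>) < e"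
        and F: "finite F" "F \<subseteq> multi_idx N" "Bn n \<subseteq> F" for e n F
    proof -
      have "(\<Sum>\<alpha>\<in>F. g \<alpha> * mon \<alpha>) - Pn n = (\<Sum>\<alpha>\<in>F. (g \<alpha> - q n \<alpha>) * mon \<alpha>)"
        using Pn_eq[OF F] by (simp add: sum_subtractf left_diff_distrib)
      also have "av \<dots> < e"
      proof (rule av_sum_lt[OF NA F(1) e])
        fix \<alpha> assume "\<alpha> \<in> F"
        then have "av (g \<alpha> - q n \<alpha>) < e" using n F by auto
        moreover have "av ((g \<alpha> - q n \<alpha>) * mon \<alpha>) \<le> av (g \<alpha> - q n \<alpha>)"
          using mon1[of \<alpha>] av_nonneg[OF NA, of "g \<alpha> - q n \<alpha>"]
          by (simp add: av_mult[OF NA] mult_left_le)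
        ultimately show "av ((g \<alpha> - q n \<alpha>) * mon \<alpha>) < e" by simp
      qed
      finally show ?thesis .
    qed
    have cauchy: "\<exists>M. \<forall>m\<ge>M. \<forall>n\<ge>M. av (Pn m - Pn n) < e" if e: "e > 0" for e
    proof -
      obtain M where M: "\<forall>n\<ge>M. \<forall>\<alpha>\<in>multi_idx N. av (g \<alpha> - q n \<alpha>) < e" using GS[OF e] by blast
      have "av (Pn m - Pn n) < e" if "m \<ge> M" "n \<ge> M" for m n
      proof -
        define B where "B = Bn (max m n)"
        have B: "finite B" "B \<subseteq> multi_idx N" "Bn m \<subseteq> B" "Bn n \<subseteq> B"
          using Bn_fin Bn_sub Bn_mono by (auto simp: B_def)
        have "Pn m - Pn n = (\<Sum>\<alpha>\<in>B. (q m \<alpha> - q n \<alpha>) * mon \<alpha>)"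
          using Pn_eq[OF B(1,2,3)] Pn_eq[OF B(1,2,4)] by (simp add: sum_subtractf left_diff_distrib)
        also have "av \<dots> < e"
        proof (rule av_sum_lt[OF NA B(1) e])
          fix \<alpha> assume "\<alpha> \<in> B"
          then have \<alpha>: "\<alpha> \<in> multi_idx N" using B by auto
          have "av ((g \<alpha> - q n \<alpha>) - (g \<alpha> - q m \<alpha>)) < e"
            using M that \<alpha> by (intro av_diff_lt[OF NA, of "g \<alpha> - q n \<alpha>" e "g \<alpha> - q m \<alpha>"]) auto
          then have lt: "av (q m \<alpha> - q n \<alpha>) < e" by (simp add: algebra_simps)
          have "av ((q m \<alpha> - q n \<alpha>) * mon \<alpha>) \<le> av (q m \<alpha> - q n \<alpha>)"
            using mon1[of \<alpha>] av_nonneg[OF NA, of "q m \<alpha> - q n \<alpha>"]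
            by (simp add: av_mult[OF NA] mult_left_le)
          then show "av ((q m \<alpha> - q n \<alpha>) * mon \<alpha>) < e" using lt by simp
        qed
        finally show ?thesis .
      qed
      then show ?thesis by blast
    qed
    have "(\<forall>e>0. \<exists>M. \<forall>m\<ge>M. \<forall>n\<ge>M. av (Pn m - Pn n) < e) \<longrightarrow>
        (\<exists>L. \<forall>e>0. \<exists>M. \<forall>n\<ge>M. av (Pn n - L) < e)"
      using CO[unfolded abs_complete_def, THEN spec[of _ Pn]] .
    moreover have "\<forall>e>0. \<exists>M. \<forall>m\<ge>M. \<forall>n\<ge>M. av (Pn m - Pn n) < e" using cauchy by blast
    ultimately obtain L where L0: "\<forall>e>0. \<exists>M. \<forall>n\<ge>M. av (Pn n - L) < e" by blast
    have L: "\<exists>M. \<forall>n\<ge>M. av (Pn n - L) < e" if "e > 0" for e using L0 that by blast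
    have hs: "abs_has_sum av (\<lambda>\<alpha>. g \<alpha> * monom_val x N \<alpha>) (multi_idx N) L"
      unfolding abs_has_sum_def
    proof (intro allI impI)
      fix e :: real assume e: "e > 0"
      obtain M1 where M1: "\<forall>n\<ge>M1. \<forall>\<alpha>\<in>multi_idx N. av (g \<alpha> - q n \<alpha>) < e" using GS[OF e] by blast
      obtain M2 where M2: "\<forall>n\<ge>M2. av (Pn n - L) < e" using L[OF e] by blast
      define n where "n = max M1 M2"
      show "\<exists>F0. finite F0 \<and> F0 \<subseteq> multi_idx N \<and> (\<forall>F. finite F \<and> F0 \<subseteq> F \<and> F \<subseteq> multi_idx N \<longrightarrow>
              av (sum (\<lambda>\<alpha>. g \<alpha> * monom_val x N \<alpha>) F - L) < e)"
      proof (intro exI[of _ "Bn n"] conjI allI impI)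
        show "finite (Bn n)" "Bn n \<subseteq> multi_idx N" by (rule Bn_fin, rule Bn_sub)
        fix F assume F: "finite F \<and> Bn n \<subseteq> F \<and> F \<subseteq> multi_idx N"
        have "av ((\<Sum>\<alpha>\<in>F. g \<alpha> * mon \<alpha>) - Pn n) < e"
          using F M1 by (intro est[OF e]) (auto simp: n_def)
        moreover have "av (Pn n - L) < e" using M2 by (simp add: n_def)
        ultimately have "av (((\<Sum>\<alpha>\<in>F. g \<alpha> * mon \<alpha>) - Pn n) + (Pn n - L)) < e"
          by (rule av_add_lt[OF NA])
        then show "av (sum (\<lambda>\<alpha>. g \<alpha> * monom_val x N \<alpha>) F - L) < e" by (simp add: mon_def)
      qed
    qed
    have uniq: "S = L" if hS: "abs_has_sum av (\<lambda>\<alpha>. g \<alpha> * monom_val x N \<alpha>) (multi_idx N) S" for S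
    proof -
      have "av (S - L) < e" if e: "e > 0" for e
      proof -
        obtain F1 where F1: "finite F1" "F1 \<subseteq> multi_idx N"
          "\<forall>F. finite F \<and> F1 \<subseteq> F \<and> F \<subseteq> multi_idx N \<longrightarrow> av (sum (\<lambda>\<alpha>. g \<alpha> * monom_val x N \<alpha>) F - S) < e"
          using hS[unfolded abs_has_sum_def, rule_format, OF e] by blast
        obtain F2 where F2: "finite F2" "F2 \<subseteq> multi_idx N"
          "\<forall>F. finite F \<and> F2 \<subseteq> F \<and> F \<subseteq> multi_idx N \<longrightarrow> av (sum (\<lambda>\<alpha>. g \<alpha> * monom_val x N \<alpha>) F - L) < e"
          using hs[unfolded abs_has_sum_def, rule_format, OF e] by blast
        define F where "F = F1 \<union> F2"
        define s where "s = sum (\<lambda>\<alpha>. g \<alpha> * monom_val x N \<alpha>) F"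
        have "av (s - L) < e" "av (s - S) < e" using F1 F2 by (auto simp: s_def F_def)
        then have "av ((s - L) - (s - S)) < e" by (rule av_diff_lt[OF NA])
        then show ?thesis by simp
      qed
      then show ?thesis using av_small_eq0[OF NA, of "S - L"] by simp
    qed
    have PE: "ps_eval av N g x = L"
      unfolding ps_eval_def using hs uniq by (rule the_equality)
    have zeroL: "L = 0" if "\<And>n. Pn n = 0"
    proof (rule av_small_eq0[OF NA])
      fix e :: real assume "e > 0"
      then obtain M where "\<forall>n\<ge>M. av (Pn n - L) < e" using L by blast
      then have "av (Pn M - L) < e" by blast
      then show "av L < e" using that[of M] av_minus[OF NA, of L] by simp
    qed
    show "ps_eval av N g x = 0 \<or> av (ps_eval av N g x) > \<epsilon>"
    proof (cases "\<forall>i. a i = 0")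
      case True
      then have "L = 0" by (intro zeroL) (simp add: Pn_def)
      then show ?thesis using PE by simp
    next
      case False
      define j where "j = (LEAST i. a i \<noteq> 0)"
      have aj: "a j \<noteq> 0" using False unfolding j_def by (metis (mono_tags) LeastI)
      have below: "a i = 0" if "i < j" for i using that not_less_Least unfolding j_def by blast
      have jn0: "j \<le> n0"
      proof (rule ccontr)
        assume "\<not> j \<le> n0"
        then have "\<forall>i\<le>n0. a i = 0" using below by auto
        then show False using a_all aj by blast
      qed
      show ?thesis
      proof (cases "c ^ j = 0")
        case True
        then have u0: "u ^ i = 0" if "i \<ge> j" for i
        proof -
          have "av (u ^ i) = c ^ i" by (simp add: av_power[OF NA] c_def)
          also have "c ^ i = c ^ j * c ^ (i - j)" using that by (simp add: power_add[symmetric])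
          finally show ?thesis using True av_eq0[OF NA] by simp
        qed
        have z: "a i * u ^ i = 0" for i by (cases "i < j") (simp_all add: below u0)
        have "L = 0" by (rule zeroL) (simp only: Pn_def z sum.neutral_const)
        then show ?thesis using PE by simp
      next
        case False
        then have cjpos: "c ^ j > 0" using c0 by (simp add: order.not_eq_order_implies_strict)
        have Pn_abs: "av (Pn n) = c ^ j" if "n > j" for n
        proof -
          have "Pn n = a j * u ^ j + (\<Sum>i\<in>{..<n} - {j}. a i * u ^ i)"
            unfolding Pn_def using that by (subst sum.remove[of _ j]) auto
          moreover have "av (a j * u ^ j) = c ^ j"
            using kabs[OF ak aj] by (simp add: av_mult[OF NA] av_power[OF NA] c_def)
          moreover have "av (\<Sum>i\<in>{..<n} - {j}. a i * u ^ i) < c ^ j"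
          proof (rule av_sum_lt[OF NA _ cjpos])
            fix i assume i: "i \<in> {..<n} - {j}"
            show "av (a i * u ^ i) < c ^ j"
            proof (cases "i < j")
              case True then show ?thesis using below cjpos av0[OF NA] by simp
            next
              case False
              then have ij: "i > j" using i by auto
              have "av (a i * u ^ i) \<le> c ^ i"
                using kle1[OF ak] av_nonneg[OF NA] c0
                by (simp add: av_mult[OF NA] av_power[OF NA] c_def mult_left_le_one_le)
              also have "c ^ i = c ^ j * c ^ (i - j)" using ij by (simp add: power_add[symmetric])
              also have "\<dots> < c ^ j"
              proof -
                have "c ^ (i - j) < 1" using ij c0 c1 by (simp add: power_less_one_iff)
                then show ?thesis using cjpos by simp
              qed
              finally show ?thesis .
            qed
          qed simp
          ultimately show ?thesis using av_strict[OF NA] by simp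
        qed
        obtain M where M: "\<forall>n\<ge>M. av (Pn n - L) < c ^ j" using L[OF cjpos] by blast
        define n where "n = max M (Suc j)"
        have "av (Pn n - L) < c ^ j" using M by (simp add: n_def)
        then have "av (L - Pn n) < av (Pn n)" using Pn_abs[of n] av_diff_sym[OF NA] by (simp add: n_def)
        then have "av (Pn n + (L - Pn n)) = av (Pn n)" by (rule av_strict[OF NA])
        then have avL: "av L = c ^ j" using Pn_abs[of n] by (simp add: n_def)
        have "c ^ j > \<epsilon>"
        proof (cases "c = 0")
          case True
          then have "j = 0" using cjpos by (cases j) auto
          then show ?thesis using True by (simp add: \<epsilon>_def)
        next
          case False
          then have "c > 0" using c0 by simp
          have "c ^ n0 \<le> c ^ j" using jn0 c0 c1 by (intro power_decreasing) auto
          moreover have "c ^ n0 > 0" using \<open>c > 0\<close> by simp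
          ultimately show ?thesis using False by (simp add: \<epsilon>_def)
        qed
        then show ?thesis using PE avL by simp
      qed
    qed
  qed
  then show ?thesis using epos by blast
qed


end
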